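(* Let $\mathcal{H}$ be a finite-dimensional real inner-product space with norm $\|\cdot\|_{\mathcal{H}}$, and let $\mathscr{R}_*:\mathcal{H}\to\mathcal{H}$ be a continuous quasinonexpansive operator with nonempty fixed-point set $\mathrm{Fix}(\mathscr{R}_* )$. Let $(\mathscr{R}^{(k)})_{k\in\mathbb{N}}$ be a sequence of (possibly random) operators $\mathcal{H}\to\mathcal{H}$, and consider the iteration \[ x^{(k+1)} = (1-\gamma^{(k)})\,x^{(k)} + \gamma^{(k)}\,\mathscr{R}^{(k)}(x^{(k)}), \qquad k\in\mathbb{N}, \] with step sizes $\gamma^{(k)}\in[0,1]$ satisfying $\sum_{k\in\mathbb{N}}\gamma^{(k)}(1-\gamma^{(k)}) = +\infty$. Define the error $\epsilon^{(k)} \coloneqq \mathscr{R}^{(k)}(x^{(k)}) - \mathscr{R}_*(x^{(k)})$ and $\varepsilon^{(k)} \coloneqq \|\epsilon^{(k)}\|_{\mathcal{H}}$. Let $(\mathcal{F}_k)_{k\in\mathbb{N}}$ be a filtration such that $x^{(k)}$ is $\mathcal{F}_k$-measurable for each $k$. Suppose that almost surely the sequence $(x^{(k)})_{k\in\mathbb{N}}$ is bounded and $\sum_{k\in\mathbb{N}}\gamma^{(k)}\,\mathbb{E}[\varepsilon^{(k)}\mid\mathcal{F}_k] < +\infty$. Then $(x^{(k)})_{k\in\mathbb{N}}$ converges almost surely to a (random) point $x^\dagger \in \mathrm{Fix}(\mathscr{R}_* )$.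
   Context: An operator $\mathscr{R}_*:\mathcal{H}\to\mathcal{H}$ is quasinonexpansive if $\mathrm{Fix}(\mathscr{R}_* )=\{x:\mathscr{R}_*(x)=x\}$ is nonempty and $\|\mathscr{R}_*(x)-x^*\|_{\mathcal{H}}\le\|x-x^*\|_{\mathcal{H}}$ for all $x\in\mathcal{H}$ and all $x^*\in\mathrm{Fix}(\mathscr{R}_* )$. All random objects are defined on a common probability space. *)

theory Defs
  imports "HOL-Analysis.Analysis" "HOL-Probability.Probability"
begin

definition Fix :: "('a \<Rightarrow> 'a) \<Rightarrow> 'a set" where
  "Fix T = {x. T x = x}"

definition quasinonexpansive :: "('a::real_normed_vector \<Rightarrow> 'a) \<Rightarrow> bool" where
  "quasinonexpansive T \<longleftrightarrow> Fix T \<noteq> {} \<and>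
     (\<forall>x. \<forall>p\<in>Fix T. norm (T x - p) \<le> norm (x - p))"

end

theory Submission
  imports Defs
begin

lemma qfejer_conv:
  fixes a b :: "nat \<Rightarrow> real"
  assumes b0: "\<And>k. 0 \<le> b k" and bs: "summable b"
    and step: "\<And>k. a (Suc k) \<le> a k + b k" and a0: "\<And>k. 0 \<le> a k"
  shows "convergent a"
proof -
  define c where "c k = a k - (\<Sum>j<k. b j)" for k
  have "decseq c" unfolding c_def
  proof (rule decseq_SucI)
    fix n show "a (Suc n) - (\<Sum>j<Suc n. b j) \<le> a n - (\<Sum>j<n. b j)" using step[of n] by simp
  qed
  moreover have "\<forall>i. - suminf b \<le> c i"
  proof
    fix i
    have "(\<Sum>j<i. b j) \<le> suminf b" using bs b0 by (intro sum_le_suminf) auto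
    then show "- suminf b \<le> c i" unfolding c_def using a0[of i] by linarith
  qed
  ultimately obtain L where L: "c \<longlonglongrightarrow> L" by (rule decseq_convergent) 
  have "(\<lambda>k. c k + (\<Sum>j<k. b j)) \<longlonglongrightarrow> L + suminf b"
    by (intro tendsto_add L summable_LIMSEQ bs)
  then have "a \<longlonglongrightarrow> L + suminf b" unfolding c_def by simp
  then show ?thesis by (auto simp: convergent_def)
qed

lemma km_identity:
  fixes u v :: "'a::real_inner"
  shows "(norm ((1 - g) *\<^sub>R u + g *\<^sub>R v))\<^sup>2 =
     (1 - g) * (norm u)\<^sup>2 + g * (norm v)\<^sup>2 - g * (1 - g) * (norm (u - v))\<^sup>2"
  by (simp add: power2_norm_eq_inner inner_diff_left inner_diff_right inner_add_left
      inner_add_right algebra_simps inner_commute)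


lemma km_det:
  fixes T :: "'a::euclidean_space \<Rightarrow> 'a" and x r :: "nat \<Rightarrow> 'a" and \<gamma> :: "nat \<Rightarrow> real"
  assumes cont: "continuous_on UNIV T" and qne: "quasinonexpansive T"
    and g01: "\<And>k. \<gamma> k \<in> {0..1}" and ns: "\<not> summable (\<lambda>k. \<gamma> k * (1 - \<gamma> k))"
    and rec: "\<And>k. x (Suc k) = (1 - \<gamma> k) *\<^sub>R x k + \<gamma> k *\<^sub>R r k"
    and es: "summable (\<lambda>k. \<gamma> k * norm (r k - T (x k)))"
    and bd: "bounded (range x)"
  shows "\<exists>z. T z = z \<and> x \<longlonglongrightarrow> z"
proof -
  define b where "b k = \<gamma> k * norm (r k - T (x k))" for k
  define d where "d k = norm (x k - T (x k))" for k
  have g0: "0 \<le> \<gamma> k" and g1: "\<gamma> k \<le> 1" for k using g01[of k] by auto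
  have b0: "0 \<le> b k" for k unfolding b_def using g0 by simp
  have bs: "summable b" using es unfolding b_def .
  have T_ne: "norm (T y - p) \<le> norm (y - p)" if "T p = p" for y p
    using qne that unfolding quasinonexpansive_def Fix_def by auto
  have est: "norm (x (Suc k) - p) \<le> norm (x k - p) + b k \<and>
     (norm (x (Suc k) - p))\<^sup>2 \<le> (norm (x k - p))\<^sup>2 - \<gamma> k * (1 - \<gamma> k) * (d k)\<^sup>2
        + b k * (2 * norm (x k - p) + b k)"
    if Tp: "T p = p" for k p
  proof -
    define y where "y = (1 - \<gamma> k) *\<^sub>R (x k - p) + \<gamma> k *\<^sub>R (T (x k) - p)"
    have xy: "x (Suc k) - p = y + \<gamma> k *\<^sub>R (r k - T (x k))"
      unfolding y_def rec by (simp add: algebra_simps)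
    have nb: "norm (\<gamma> k *\<^sub>R (r k - T (x k))) = b k" unfolding b_def using g0 by simp
    have id: "(norm y)\<^sup>2 = (1 - \<gamma> k) * (norm (x k - p))\<^sup>2 + \<gamma> k * (norm (T (x k) - p))\<^sup>2
        - \<gamma> k * (1 - \<gamma> k) * (d k)\<^sup>2"
      unfolding y_def km_identity d_def by (simp add: algebra_simps)
    have "(norm (T (x k) - p))\<^sup>2 \<le> (norm (x k - p))\<^sup>2"
      using T_ne[OF Tp] by (simp add: power_mono)
    then have "\<gamma> k * (norm (T (x k) - p))\<^sup>2 \<le> \<gamma> k * (norm (x k - p))\<^sup>2"
      using g0 by (simp add: mult_left_mono)
    then have y2: "(norm y)\<^sup>2 \<le> (norm (x k - p))\<^sup>2 - \<gamma> k * (1 - \<gamma> k) * (d k)\<^sup>2"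
      using id by (simp add: algebra_simps)
    have "0 \<le> \<gamma> k * (1 - \<gamma> k) * (d k)\<^sup>2" using g0 g1 by simp
    then have "(norm y)\<^sup>2 \<le> (norm (x k - p))\<^sup>2" using y2 by linarith
    then have ny: "norm y \<le> norm (x k - p)"
      using power2_le_imp_le by fastforce
    have n1: "norm (x (Suc k) - p) \<le> norm y + b k"
      unfolding xy using norm_triangle_ineq[of y "\<gamma> k *\<^sub>R (r k - T (x k))"] nb by linarith
    have "(norm (x (Suc k) - p))\<^sup>2 \<le> (norm y + b k)\<^sup>2"
      using n1 by (simp add: power_mono)
    also have "\<dots> = (norm y)\<^sup>2 + b k * (2 * norm y + b k)" by (simp add: power2_eq_square algebra_simps)
    also have "\<dots> \<le> (norm y)\<^sup>2 + b k * (2 * norm (x k - p) + b k)"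
      using ny b0[of k] by (simp add: mult_left_mono)
    finally show ?thesis using n1 ny y2 by linarith
  qed
  have conv: "convergent (\<lambda>k. norm (x k - p))" if Tp: "T p = p" for p
    by (rule qfejer_conv[OF b0 bs]) (use est[OF Tp] in auto)
  obtain p where Tp: "T p = p" using qne unfolding quasinonexpansive_def Fix_def by auto
  obtain B where B: "\<And>k. norm (x k - p) \<le> B"
  proof -
    from bd obtain B0 where "\<And>k. norm (x k) \<le> B0" by (auto simp: bounded_iff)
    then show ?thesis using that[of "B0 + norm p"] by (meson add_mono norm_triangle_ineq4 order_trans order_refl)
  qed
  define C where "C = 2 * B + suminf b"
  have ble: "b k \<le> suminf b" for k
    using sum_le_suminf[OF bs, of "{k}"] b0 by auto
  have B0: "0 \<le> B" using B[of 0] norm_ge_zero order_trans by blast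
  have C0: "0 \<le> C" unfolding C_def using B0 ble[of 0] b0[of 0] by linarith
  have step2: "\<gamma> k * (1 - \<gamma> k) * (d k)\<^sup>2 \<le> (norm (x k - p))\<^sup>2 - (norm (x (Suc k) - p))\<^sup>2 + C * b k" for k
  proof -
    have "b k * (2 * norm (x k - p) + b k) \<le> b k * C"
      unfolding C_def using B[of k] ble[of k] b0[of k] by (intro mult_left_mono) auto
    then show ?thesis using est[OF Tp, of k] by (simp add: algebra_simps)
  qed
  have sd: "summable (\<lambda>k. \<gamma> k * (1 - \<gamma> k) * (d k)\<^sup>2)"
  proof (rule bounded_imp_summable)
    show "0 \<le> \<gamma> k * (1 - \<gamma> k) * (d k)\<^sup>2" for k using g0[of k] g1[of k] by simp
    fix n
    have "(\<Sum>k\<le>n. \<gamma> k * (1 - \<gamma> k) * (d k)\<^sup>2) \<le>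
        (\<Sum>k\<le>n. (norm (x k - p))\<^sup>2 - (norm (x (Suc k) - p))\<^sup>2 + C * b k)"
      by (intro sum_mono step2)
    also have "\<dots> = (norm (x 0 - p))\<^sup>2 - (norm (x (Suc n) - p))\<^sup>2 + C * (\<Sum>k\<le>n. b k)"
      using sum_telescope[of "\<lambda>k. (norm (x k - p))\<^sup>2" n] by (simp add: sum.distrib sum_distrib_left)
    also have "\<dots> \<le> (norm (x 0 - p))\<^sup>2 + C * suminf b"
      using sum_le_suminf[OF bs, of "{..n}"] C0 b0 
      by (intro add_mono) (auto intro!: mult_left_mono simp del: sum_le_suminf)
    finally show "(\<Sum>k\<le>n. \<gamma> k * (1 - \<gamma> k) * (d k)\<^sup>2) \<le> (norm (x 0 - p))\<^sup>2 + C * suminf b" .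
  qed
  have freq: "\<exists>k\<ge>N. d k < e" if e: "e > 0" for N e
  proof (rule ccontr)
    assume "\<not> ?thesis"
    then have dk: "\<And>k. k \<ge> N \<Longrightarrow> e \<le> d k" by (meson not_le)
    have "summable (\<lambda>k. \<gamma> k * (1 - \<gamma> k))"
    proof (rule summable_comparison_test')
      show "summable (\<lambda>k. \<gamma> k * (1 - \<gamma> k) * (d k)\<^sup>2 / e\<^sup>2)" using sd by (rule summable_divide)
      fix k assume "N \<le> k"
      then have "e\<^sup>2 \<le> (d k)\<^sup>2" using dk e by (simp add: power_mono)
      then have "1 \<le> (d k)\<^sup>2 / e\<^sup>2" using e by simp
      moreover have "0 \<le> \<gamma> k * (1 - \<gamma> k)" using g0[of k] g1[of k] by simp
      ultimately have "\<gamma> k * (1 - \<gamma> k) * 1 \<le> \<gamma> k * (1 - \<gamma> k) * ((d k)\<^sup>2 / e\<^sup>2)"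
        by (intro mult_left_mono)
      then show "norm (\<gamma> k * (1 - \<gamma> k)) \<le> \<gamma> k * (1 - \<gamma> k) * (d k)\<^sup>2 / e\<^sup>2"
        using g0[of k] g1[of k] by simp
    qed
    then show False using ns by simp
  qed
  define n where "n j = (SOME k. k \<ge> j \<and> d k < 1 / (real j + 1))" for j
  have n: "n j \<ge> j \<and> d (n j) < 1 / (real j + 1)" for j
    unfolding n_def by (rule someI_ex) (use freq[of "1 / (real j + 1)" j] in auto)
  have "bounded (range (x \<circ> n))" using bd by (rule bounded_subset) auto
  then obtain z \<rho> where \<rho>: "strict_mono \<rho>" and xz: "((x \<circ> n) \<circ> \<rho>) \<longlonglongrightarrow> z"
    using bounded_imp_convergent_subsequence by blast
  have inv1: "(\<lambda>i. 1 / (real i + 1)) \<longlonglongrightarrow> 0"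
  proof -
    have "(\<lambda>i. 1 / (real i + 1)) = (\<lambda>n. inverse (real (Suc n)))"
      by (simp add: fun_eq_iff inverse_eq_divide)
    then show ?thesis using LIMSEQ_inverse_real_of_nat by simp
  qed
  have nr_top: "filterlim (\<lambda>i. n (\<rho> i)) at_top sequentially"
  proof (rule filterlim_at_top_mono[OF filterlim_ident])
    show "\<forall>\<^sub>F i in sequentially. i \<le> n (\<rho> i)"
      using n seq_suble[OF \<rho>] le_trans by (intro always_eventually) meson
  qed
  have "(\<lambda>i. d (n (\<rho> i))) \<longlonglongrightarrow> norm (z - T z)"
  proof -
    have "(\<lambda>i. T (x (n (\<rho> i)))) \<longlonglongrightarrow> T z"
      using xz cont by (intro continuous_on_tendsto_compose[of UNIV T]) (auto simp: o_def)
    then show ?thesis unfolding d_def using xz by (intro tendsto_intros) (auto simp: o_def)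
  qed
  moreover have "(\<lambda>i. d (n (\<rho> i))) \<longlonglongrightarrow> 0"
  proof (rule tendsto_sandwich[of "\<lambda>_. 0" _ _ "\<lambda>i. 1 / (real (\<rho> i) + 1)"])
    show "\<forall>\<^sub>F i in sequentially. 0 \<le> d (n (\<rho> i))" unfolding d_def by simp
    show "\<forall>\<^sub>F i in sequentially. d (n (\<rho> i)) \<le> 1 / (real (\<rho> i) + 1)"
      using n by (auto intro!: always_eventually less_imp_le)
    show "(\<lambda>i. 1 / (real (\<rho> i) + 1)) \<longlonglongrightarrow> 0"
      by (rule filterlim_compose[OF _ filterlim_subseq[OF \<rho>]]) (rule inv1)
  qed simp
  ultimately have "norm (z - T z) = 0" using LIMSEQ_unique by blast
  then have Tz: "T z = z" by simp
  obtain L where L: "(\<lambda>k. norm (x k - z)) \<longlonglongrightarrow> L" using conv[OF Tz] by (auto simp: convergent_def)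
  have "(\<lambda>i. norm (x (n (\<rho> i)) - z)) \<longlonglongrightarrow> L" using filterlim_compose[OF L nr_top] by simp
  moreover have "(\<lambda>i. norm (x (n (\<rho> i)) - z)) \<longlonglongrightarrow> 0"
  proof -
    have "(\<lambda>i. x (n (\<rho> i))) \<longlonglongrightarrow> z" using xz by (simp add: o_def)
    then have "(\<lambda>i. x (n (\<rho> i)) - z) \<longlonglongrightarrow> 0" by (rule LIM_zero)
    then show ?thesis by (rule tendsto_norm_zero)
  qed
  ultimately have "L = 0" using LIMSEQ_unique by blast
  then have "(\<lambda>k. x k - z) \<longlonglongrightarrow> 0" using L tendsto_norm_zero_iff by blast
  then have "x \<longlonglongrightarrow> z" by (rule LIM_zero_cancel)
  then show ?thesis using Tz by blast
qed

lemma trunc_sum_le: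
  fixes c :: "nat \<Rightarrow> ennreal"
  shows "(\<Sum>k<n. (if (\<Sum>j\<le>k. c j) \<le> B then 1 else 0) * c k) \<le> B \<and>
         (\<Sum>k<n. (if (\<Sum>j\<le>k. c j) \<le> B then 1 else 0) * c k) \<le> (\<Sum>k<n. c k)"
proof (induction n)
  case 0
  then show ?case by simp
next
  case (Suc n)
  show ?case
  proof (cases "(\<Sum>j\<le>n. c j) \<le> B")
    case True
    have "(\<Sum>k<Suc n. (if (\<Sum>j\<le>k. c j) \<le> B then 1 else 0) * c k) \<le> (\<Sum>k<Suc n. c k)"
      using Suc.IH True by (simp add: add_right_mono)
    moreover have "(\<Sum>k<Suc n. c k) = (\<Sum>j\<le>n. c j)" by (simp add: lessThan_Suc_atMost)
    ultimately show ?thesis using True by (metis order_trans)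
  next
    case False
    then show ?thesis using Suc.IH by (auto intro: order_trans add_increasing2)
  qed
qed

lemma cond_BC:
  fixes M :: "'w measure" and F :: "nat \<Rightarrow> 'w measure" and e :: "nat \<Rightarrow> 'w \<Rightarrow> ennreal" and a :: "nat \<Rightarrow> ennreal"
  assumes "prob_space M"
    and filt: "filtration (space M) F"
    and sub: "\<And>k. subalgebra M (F k)"
    and em: "\<And>k. e k \<in> borel_measurable M"
    and hyp: "AE w in M. (\<Sum>k. a k * nn_cond_exp M (F k) (e k) w) < \<infinity>"
  shows "AE w in M. (\<Sum>k. a k * e k w) < \<infinity>"
proof -
  interpret prob_space M by fact
  have sfs: "sigma_finite_subalgebra M (F k)" for k
    by (intro finite_measure_subalgebra_is_sigma_finite)
      (simp add: finite_measure_subalgebra_def finite_measure_subalgebra_axioms_def finite_measure_axioms sub)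
  define c where "c k w = a k * nn_cond_exp M (F k) (e k) w" for k w
  define S where "S k w = (\<Sum>j\<le>k. c j w)" for k w
  have cF: "c j \<in> borel_measurable (F k)" if "j \<le> k" for j k
  proof -
    have "subalgebra (F k) (F j)" unfolding subalgebra_def
      using filtration.sets_F_mono[OF filt that] filtration.space_F[OF filt] by auto
    then show ?thesis unfolding c_def by (rule measurable_from_subalg) simp
  qed
  have SF: "S k \<in> borel_measurable (F k)" for k
    unfolding S_def by (intro borel_measurable_sum) (use cF in auto)
  define G where "G N k w = (if S k w \<le> of_nat N then 1 else 0 :: ennreal)" for N k w
  have GF: "G N k \<in> borel_measurable (F k)" for N k
    unfolding G_def using SF[of k] by measurable
  have GM: "G N k \<in> borel_measurable M" for N k
    by (rule measurable_from_subalg[OF sub GF])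
  define Z where "Z N w = (\<Sum>k. G N k w * (a k * e k w))" for N w
  have ZM: "Z N \<in> borel_measurable M" for N
    unfolding Z_def using GM em by measurable
  have Zint: "(\<integral>\<^sup>+ w. Z N w \<partial>M) \<le> of_nat N" for N
  proof -
    have "(\<integral>\<^sup>+ w. Z N w \<partial>M) = (\<Sum>k. \<integral>\<^sup>+ w. G N k w * (a k * e k w) \<partial>M)"
      unfolding Z_def by (rule nn_integral_suminf) (use GM em in measurable)
    also have "\<dots> = (\<Sum>k. \<integral>\<^sup>+ w. G N k w * c k w \<partial>M)"
    proof (rule suminf_cong)
      fix k
      have "(\<integral>\<^sup>+ w. G N k w * (a k * e k w) \<partial>M) = a k * (\<integral>\<^sup>+ w. G N k w * e k w \<partial>M)"
        by (subst nn_integral_cmult[symmetric]) (use GM em in \<open>auto simp: ac_simps\<close>)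
      also have "\<dots> = a k * (\<integral>\<^sup>+ w. G N k w * nn_cond_exp M (F k) (e k) w \<partial>M)"
        using sigma_finite_subalgebra.nn_cond_exp_intg[OF sfs GF em] by simp
      also have "\<dots> = (\<integral>\<^sup>+ w. G N k w * c k w \<partial>M)"
      proof -
        have m: "(\<lambda>w. G N k w * nn_cond_exp M (F k) (e k) w) \<in> borel_measurable M"
          using GM[of N k] by measurable
        show ?thesis unfolding c_def
          by (subst nn_integral_cmult[symmetric, OF m]) (auto simp: ac_simps)
      qed
      finally show "(\<integral>\<^sup>+ w. G N k w * (a k * e k w) \<partial>M) = (\<integral>\<^sup>+ w. G N k w * c k w \<partial>M)" .
    qed
    also have "\<dots> = (\<integral>\<^sup>+ w. (\<Sum>k. G N k w * c k w) \<partial>M)"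
      by (rule nn_integral_suminf[symmetric]) (use GM in \<open>unfold c_def, measurable\<close>)
    also have "\<dots> \<le> (\<integral>\<^sup>+ w. of_nat N \<partial>M)"
    proof (rule nn_integral_mono)
      fix w
      show "(\<Sum>k. G N k w * c k w) \<le> of_nat N"
        unfolding suminf_eq_SUP
      proof (rule SUP_least)
        fix n
        show "(\<Sum>k<n. G N k w * c k w) \<le> of_nat N"
          using trunc_sum_le[of "\<lambda>k. c k w" "of_nat N" n] unfolding G_def S_def by simp
      qed
    qed
    also have "\<dots> = of_nat N" by (simp add: emeasure_space_1)
    finally show ?thesis .
  qed
  have "AE w in M. Z N w \<noteq> \<infinity>" for N
    by (rule nn_integral_PInf_AE[OF ZM]) (use Zint[of N] in \<open>auto simp: top_unique\<close>)
  then have "AE w in M. \<forall>N. Z N w \<noteq> \<infinity>" by (simp add: AE_all_countable)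
  then show ?thesis using hyp
  proof eventually_elim
    case (elim w)
    then obtain r where r: "r \<ge> 0" "(\<Sum>k. c k w) = ennreal r"
      unfolding c_def by (auto simp: less_top_ennreal)
    define N where "N = nat \<lceil>r\<rceil>"
    have rN: "ennreal r \<le> of_nat N"
      unfolding N_def using r(1) ennreal_of_nat_eq_real_of_nat
      by (metis ennreal_leI real_nat_ceiling_ge)
    have "S k w \<le> (\<Sum>k. c k w)" for k
      unfolding S_def by (rule sum_le_suminf) auto
    then have "S k w \<le> of_nat N" for k using rN r(2) by (metis order_trans)
    then have "G N k w = 1" for k unfolding G_def by simp
    then have "Z N w = (\<Sum>k. a k * e k w)" unfolding Z_def by simp
    moreover have "Z N w \<noteq> \<infinity>" using elim(1) by blast
    ultimately show ?case by (simp add: less_top)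
  qed
qed

theorem mainTheorem2:
  fixes M :: "'w measure"
    and F :: "nat \<Rightarrow> 'w measure"
    and Rstar :: "'a::euclidean_space \<Rightarrow> 'a"
    and R :: "nat \<Rightarrow> 'w \<Rightarrow> 'a \<Rightarrow> 'a"
    and x :: "nat \<Rightarrow> 'w \<Rightarrow> 'a"
    and \<gamma> :: "nat \<Rightarrow> real"
  assumes "prob_space M"
    and "continuous_on UNIV Rstar"
    and "quasinonexpansive Rstar"
    and "\<And>k. \<gamma> k \<in> {0..1}"
    and "\<not> summable (\<lambda>k. \<gamma> k * (1 - \<gamma> k))"
    and "\<And>k w. w \<in> space M \<Longrightarrow>
           x (Suc k) w = (1 - \<gamma> k) *\<^sub>R x k w + \<gamma> k *\<^sub>R R k w (x k w)"
    and "filtration (space M) F"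
    and "\<And>k. subalgebra M (F k)"
    and "\<And>k. x k \<in> borel_measurable (F k)"
    and "\<And>k. (\<lambda>w. R k w (x k w)) \<in> borel_measurable M"
    and "AE w in M. bounded (range (\<lambda>k. x k w))"
    and "AE w in M. (\<Sum>k. ennreal (\<gamma> k) *
           nn_cond_exp M (F k) (\<lambda>v. ennreal (norm (R k v (x k v) - Rstar (x k v)))) w) < \<infinity>"
  shows "\<exists>xdag. xdag \<in> borel_measurable M \<and>
           (AE w in M. xdag w \<in> Fix Rstar \<and> (\<lambda>k. x k w) \<longlonglongrightarrow> xdag w)"
  proof -
  note asm = assms
  interpret prob_space M by fact
  have xM: "x k \<in> borel_measurable M" for k by (rule measurable_from_subalg[OF asm(8) asm(9)])
  have RsM: "Rstar \<in> borel_measurable borel" by (rule borel_measurable_continuous_onI[OF asm(2)])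
  define e where "e k v = ennreal (norm (R k v (x k v) - Rstar (x k v)))" for k v
  have eM: "e k \<in> borel_measurable M" for k
  proof -
    have "(\<lambda>v. Rstar (x k v)) \<in> borel_measurable M" using measurable_compose[OF xM RsM] by simp
    then show ?thesis unfolding e_def using asm(10)[of k] by measurable
  qed
  have "AE w in M. (\<Sum>k. ennreal (\<gamma> k) * e k w) < \<infinity>"
    by (rule cond_BC[OF asm(1) asm(7) asm(8) eM]) (unfold e_def[abs_def], use asm(12) in simp)
  then have AEs: "AE w in M. summable (\<lambda>k. \<gamma> k * norm (R k w (x k w) - Rstar (x k w)))"
  proof eventually_elim
    case (elim w)
    have g0: "0 \<le> \<gamma> k" for k using asm(4)[of k] by simp
    have eq: "(\<Sum>k. ennreal (\<gamma> k) * e k w) = (\<Sum>k. ennreal (\<gamma> k * norm (R k w (x k w) - Rstar (x k w))))"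
      unfolding e_def by (intro suminf_cong) (simp add: ennreal_mult g0)
    show ?case
    proof (rule summable_suminf_not_top)
      show "0 \<le> \<gamma> k * norm (R k w (x k w) - Rstar (x k w))" for k using g0[of k] by simp
      show "(\<Sum>k. ennreal (\<gamma> k * norm (R k w (x k w) - Rstar (x k w)))) \<noteq> \<top>"
        using elim eq by simp
    qed
  qed
  have "AE w in M. \<exists>z. Rstar z = z \<and> (\<lambda>k. x k w) \<longlonglongrightarrow> z"
    using AEs asm(11) AE_space
  proof eventually_elim
    case (elim w)
    show ?case
    proof (rule km_det[OF asm(2) asm(3) asm(4) asm(5), of "\<lambda>k. x k w" "\<lambda>k. R k w (x k w)"])
      show "x (Suc k) w = (1 - \<gamma> k) *\<^sub>R x k w + \<gamma> k *\<^sub>R R k w (x k w)" for k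
        using asm(6) elim(3) by blast
      show "summable (\<lambda>k. \<gamma> k * norm (R k w (x k w) - Rstar (x k w)))" using elim(1) .
      show "bounded (range (\<lambda>k. x k w))" using elim(2) .
    qed
  qed
  then have "AE w in M. lim (\<lambda>k. x k w) \<in> Fix Rstar \<and> (\<lambda>k. x k w) \<longlonglongrightarrow> lim (\<lambda>k. x k w)"
  proof eventually_elim
    case (elim w)
    then obtain z where z: "Rstar z = z" "(\<lambda>k. x k w) \<longlonglongrightarrow> z" by blast
    from z(2) have "lim (\<lambda>k. x k w) = z" by (rule limI)
    then show ?case using z by (simp add: Fix_def)
  qed
  moreover have "(\<lambda>w. lim (\<lambda>k. x k w)) \<in> borel_measurable M"
    using xM by (rule borel_measurable_lim_metric)
  ultimately show ?thesis by blast
qed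

end
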